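(* Over $\mathsf{RCA}_0$, the Additive Ramsey Theorem implies $\Sigma^0_2\text{-}\mathsf{IND}$.
   Context: $\mathsf{RCA}_0$: second-order arithmetic with $\Delta^0_1$-comprehension and $\Sigma^0_1$-induction. $\Sigma^0_2\text{-}\mathsf{IND}$: the induction scheme for $\Sigma^0_2$ formulae with parameters. Additive Ramsey Theorem: for every finite semigroup $(S,* )$ and every colouring $C:[\mathbb{N}]^2\to S$ such that $C(i,j)*C(j,k)=C(i,k)$ for all $i<j<k$, there is an infinite set $I\subseteq\mathbb{N}$ and $a\in S$ with $C(i,j)=a$ for all $i<j$ in $I$. *)

theory Defs
  imports Main
begin

datatype trm = Var nat | Zero | One | Plus trm trm | Times trm trm

text \<open>Formulas: first-order variables and second-order (set) variables are
 indexed by naturals in separate namespaces.\<close>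
datatype fm =
    Eq trm trm | Less trm trm | Mem trm nat
  | Neg fm | Conj fm fm | Disj fm fm | Imp fm fm
  | All nat fm | Ex nat fm
  | SAll nat fm | SEx nat fm

fun vars_trm :: "trm \<Rightarrow> nat set" where
  "vars_trm (Var x) = {x}"
| "vars_trm Zero = {}"
| "vars_trm One = {}"
| "vars_trm (Plus s t) = vars_trm s \<union> vars_trm t"
| "vars_trm (Times s t) = vars_trm s \<union> vars_trm t"

inductive bounded :: "fm \<Rightarrow> bool" where
  "bounded (Eq s t)"
| "bounded (Less s t)"
| "bounded (Mem t X)"
| "bounded p \<Longrightarrow> bounded (Neg p)"
| "bounded p \<Longrightarrow> bounded q \<Longrightarrow> bounded (Conj p q)"
| "bounded p \<Longrightarrow> bounded q \<Longrightarrow> bounded (Disj p q)"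
| "bounded p \<Longrightarrow> bounded q \<Longrightarrow> bounded (Imp p q)"
| "x \<notin> vars_trm t \<Longrightarrow> bounded p \<Longrightarrow> bounded (All x (Imp (Less (Var x) t) p))"
| "x \<notin> vars_trm t \<Longrightarrow> bounded p \<Longrightarrow> bounded (Ex x (Conj (Less (Var x) t) p))"

definition Sigma01 :: "fm \<Rightarrow> bool" where
  "Sigma01 p \<longleftrightarrow> (\<exists>x q. p = Ex x q \<and> bounded q)"

definition Pi01 :: "fm \<Rightarrow> bool" where
  "Pi01 p \<longleftrightarrow> (\<exists>x q. p = All x q \<and> bounded q)"

definition Sigma02 :: "fm \<Rightarrow> bool" where
  "Sigma02 p \<longleftrightarrow> (\<exists>x y q. p = Ex x (All y q) \<and> bounded q)"

section \<open>Structures (Henkin models) for L2\<close>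

text \<open>First-order universe: the whole type 'm; second-order universe:
 the family l2sets of subsets of 'm.\<close>
record 'm l2struct =
  zr :: 'm
  on :: 'm
  ad :: "'m \<Rightarrow> 'm \<Rightarrow> 'm"
  mu :: "'m \<Rightarrow> 'm \<Rightarrow> 'm"
  lt :: "'m \<Rightarrow> 'm \<Rightarrow> bool"
  l2sets :: "'m set set"

fun eval :: "'m l2struct \<Rightarrow> (nat \<Rightarrow> 'm) \<Rightarrow> trm \<Rightarrow> 'm" where
  "eval M e (Var x) = e x"
| "eval M e Zero = zr M"
| "eval M e One = on M"
| "eval M e (Plus s t) = ad M (eval M e s) (eval M e t)"
| "eval M e (Times s t) = mu M (eval M e s) (eval M e t)"

fun sat :: "'m l2struct \<Rightarrow> (nat \<Rightarrow> 'm) \<Rightarrow> (nat \<Rightarrow> 'm set) \<Rightarrow> fm \<Rightarrow> bool" where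
  "sat M e E (Eq s t) = (eval M e s = eval M e t)"
| "sat M e E (Less s t) = lt M (eval M e s) (eval M e t)"
| "sat M e E (Mem t X) = (eval M e t \<in> E X)"
| "sat M e E (Neg p) = (\<not> sat M e E p)"
| "sat M e E (Conj p q) = (sat M e E p \<and> sat M e E q)"
| "sat M e E (Disj p q) = (sat M e E p \<or> sat M e E q)"
| "sat M e E (Imp p q) = (sat M e E p \<longrightarrow> sat M e E q)"
| "sat M e E (All x p) = (\<forall>m. sat M (e(x := m)) E p)"
| "sat M e E (Ex x p) = (\<exists>m. sat M (e(x := m)) E p)"
| "sat M e E (SAll X p) = (\<forall>A\<in>l2sets M. sat M e (E(X := A)) p)"
| "sat M e E (SEx X p) = (\<exists>A\<in>l2sets M. sat M e (E(X := A)) p)"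

definition good_env :: "'m l2struct \<Rightarrow> (nat \<Rightarrow> 'm set) \<Rightarrow> bool" where
  "good_env M E \<longleftrightarrow> (\<forall>i. E i \<in> l2sets M)"

section \<open>Axioms of RCA_0 (Simpson, Def. I.2.4 and II.1)\<close>

definition basic_axioms :: "'m l2struct \<Rightarrow> bool" where
  "basic_axioms M \<longleftrightarrow>
     (\<forall>n. ad M n (on M) \<noteq> zr M) \<and>
     (\<forall>m n. ad M m (on M) = ad M n (on M) \<longrightarrow> m = n) \<and>
     (\<forall>m. ad M m (zr M) = m) \<and>
     (\<forall>m n. ad M m (ad M n (on M)) = ad M (ad M m n) (on M)) \<and>
     (\<forall>m. mu M m (zr M) = zr M) \<and>
     (\<forall>m n. mu M m (ad M n (on M)) = ad M (mu M m n) m) \<and>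
     (\<forall>m. \<not> lt M m (zr M)) \<and>
     (\<forall>m n. lt M m (ad M n (on M)) \<longleftrightarrow> (lt M m n \<or> m = n))"

definition IND :: "(fm \<Rightarrow> bool) \<Rightarrow> 'm l2struct \<Rightarrow> bool" where
  "IND C M \<longleftrightarrow>
     (\<forall>p x e E. C p \<longrightarrow> good_env M E \<longrightarrow>
        sat M (e(x := zr M)) E p \<longrightarrow>
        (\<forall>m. sat M (e(x := m)) E p \<longrightarrow> sat M (e(x := ad M m (on M))) E p) \<longrightarrow>
        (\<forall>m. sat M (e(x := m)) E p))"

definition Delta01_CA :: "'m l2struct \<Rightarrow> bool" where
  "Delta01_CA M \<longleftrightarrow>
     (\<forall>p q x e E. Sigma01 p \<longrightarrow> Pi01 q \<longrightarrow> good_env M E \<longrightarrow>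
        (\<forall>m. sat M (e(x := m)) E p \<longleftrightarrow> sat M (e(x := m)) E q) \<longrightarrow>
        (\<exists>A\<in>l2sets M. \<forall>m. m \<in> A \<longleftrightarrow> sat M (e(x := m)) E p))"

definition RCA0 :: "'m l2struct \<Rightarrow> bool" where
  "RCA0 M \<longleftrightarrow> basic_axioms M \<and> IND Sigma01 M \<and> Delta01_CA M"

definition pr :: "'m l2struct \<Rightarrow> 'm \<Rightarrow> 'm \<Rightarrow> 'm" where
  "pr M i j = ad M (mu M (ad M i j) (ad M i j)) i"

text \<open>F codes a function from D to Y: F is a subset of D x Y and is
 total and single-valued on D.\<close>
definition is_fun :: "'m l2struct \<Rightarrow> 'm set \<Rightarrow> 'm set \<Rightarrow> 'm set \<Rightarrow> bool" where
  "is_fun M D Y F \<longleftrightarrow>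
     (\<forall>k\<in>F. \<exists>i\<in>D. \<exists>y\<in>Y. k = pr M i y) \<and>
     (\<forall>i\<in>D. \<exists>y\<in>Y. pr M i y \<in> F) \<and>
     (\<forall>i\<in>D. \<forall>y y'. pr M i y \<in> F \<longrightarrow> pr M i y' \<in> F \<longrightarrow> y = y')"

definition model_finite :: "'m l2struct \<Rightarrow> 'm set \<Rightarrow> bool" where
  "model_finite M S \<longleftrightarrow> (\<exists>b. \<forall>s\<in>S. lt M s b)"

definition model_infinite :: "'m l2struct \<Rightarrow> 'm set \<Rightarrow> bool" where
  "model_infinite M I \<longleftrightarrow> (\<forall>n. \<exists>m\<in>I. lt M n m)"

text \<open>ART: for every finite semigroup (Sg, Op) and every additive colouring
 Cc : [N]^2 \<rightarrow> Sg there is an infinite I and a \<in> Sg with Cc(i,j) = a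
 for all i < j in I.\<close>
definition ART :: "'m l2struct \<Rightarrow> bool" where
  "ART M \<longleftrightarrow>
    (\<forall>Sg\<in>l2sets M. \<forall>Op\<in>l2sets M. \<forall>Cc\<in>l2sets M.
      let op = (\<lambda>a b c. pr M (pr M a b) c \<in> Op);
          col = (\<lambda>i j a. pr M (pr M i j) a \<in> Cc)
      in
      model_finite M Sg \<longrightarrow>
      is_fun M {pr M a b | a b. a \<in> Sg \<and> b \<in> Sg} Sg Op \<longrightarrow>
      (\<forall>a\<in>Sg. \<forall>b\<in>Sg. \<forall>c\<in>Sg. \<forall>d e f g.
          op a b d \<longrightarrow> op d c e \<longrightarrow> op b c f \<longrightarrow> op a f g \<longrightarrow> e = g) \<longrightarrow>
      is_fun M {pr M i j | i j. lt M i j} Sg Cc \<longrightarrow>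
      (\<forall>i j k a b c. lt M i j \<longrightarrow> lt M j k \<longrightarrow>
          col i j a \<longrightarrow> col j k b \<longrightarrow> col i k c \<longrightarrow> op a b c) \<longrightarrow>
      (\<exists>I\<in>l2sets M. model_infinite M I \<and>
          (\<exists>a\<in>Sg. \<forall>i\<in>I. \<forall>j\<in>I. lt M i j \<longrightarrow> col i j a)))"

end

theory Submission
  imports Defs
begin

fun rent :: "(nat \<Rightarrow> nat) \<Rightarrow> trm \<Rightarrow> trm" where
  "rent f (Var x) = Var (f x)"
| "rent f Zero = Zero"
| "rent f One = One"
| "rent f (Plus s t) = Plus (rent f s) (rent f t)"
| "rent f (Times s t) = Times (rent f s) (rent f t)"

fun ren :: "(nat \<Rightarrow> nat) \<Rightarrow> fm \<Rightarrow> fm" where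
  "ren f (Eq s t) = Eq (rent f s) (rent f t)"
| "ren f (Less s t) = Less (rent f s) (rent f t)"
| "ren f (Mem t X) = Mem (rent f t) X"
| "ren f (Neg p) = Neg (ren f p)"
| "ren f (Conj p q) = Conj (ren f p) (ren f q)"
| "ren f (Disj p q) = Disj (ren f p) (ren f q)"
| "ren f (Imp p q) = Imp (ren f p) (ren f q)"
| "ren f (All x p) = All (f x) (ren f p)"
| "ren f (Ex x p) = Ex (f x) (ren f p)"
| "ren f (SAll X p) = SAll X (ren f p)"
| "ren f (SEx X p) = SEx X (ren f p)"

lemma eval_rent: "eval M e (rent f t) = eval M (e \<circ> f) t"
  by (induction t) auto

lemma vars_rent: "vars_trm (rent f t) = f ` vars_trm t"
  by (induction t) auto

lemma upd_comp_inj: "inj f \<Longrightarrow> (e(f x := m)) \<circ> f = (e \<circ> f)(x := m)"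
  by (auto simp: fun_eq_iff inj_eq)

lemma sat_ren: "inj f \<Longrightarrow> sat M e E (ren f p) = sat M (e \<circ> f) E p"
  by (induction p arbitrary: e E) (auto simp: eval_rent upd_comp_inj)

lemma bounded_ren: assumes "inj f" shows "bounded p \<Longrightarrow> bounded (ren f p)"
proof (induction rule: bounded.induct)
  case (8 x t p)
  then show ?case using bounded.intros(8)[of "f x" "rent f t" "ren f p"]
    using assms by (simp add: vars_rent inj_image_mem_iff)
next
  case (9 x t p)
  then show ?case using bounded.intros(9)[of "f x" "rent f t" "ren f p"]
    using assms by (simp add: vars_rent inj_image_mem_iff)
qed (auto intro: bounded.intros)

lemma eval_upd_notin: "x \<notin> vars_trm t \<Longrightarrow> eval M (e(x:=a)) t = eval M e t"
  by (induction t) auto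

definition BEx :: "nat \<Rightarrow> trm \<Rightarrow> fm \<Rightarrow> fm" where
  "BEx w t p = Ex w (Conj (Less (Var w) t) p)"
definition BAll :: "nat \<Rightarrow> trm \<Rightarrow> fm \<Rightarrow> fm" where
  "BAll w t p = All w (Imp (Less (Var w) t) p)"

lemma bounded_BEx: "w \<notin> vars_trm t \<Longrightarrow> bounded p \<Longrightarrow> bounded (BEx w t p)"
  unfolding BEx_def by (rule bounded.intros)
lemma bounded_BAll: "w \<notin> vars_trm t \<Longrightarrow> bounded p \<Longrightarrow> bounded (BAll w t p)"
  unfolding BAll_def by (rule bounded.intros)

lemma sat_BEx: "w \<notin> vars_trm t \<Longrightarrow> sat M e E (BEx w t p) = (\<exists>a. lt M a (eval M e t) \<and> sat M (e(w:=a)) E p)"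
  unfolding BEx_def by (simp add: eval_upd_notin)
lemma sat_BAll: "w \<notin> vars_trm t \<Longrightarrow> sat M e E (BAll w t p) = (\<forall>a. lt M a (eval M e t) \<longrightarrow> sat M (e(w:=a)) E p)"
  unfolding BAll_def by (simp add: eval_upd_notin)

lemmas bnd_intros = bounded.intros(1-7) bounded_BEx bounded_BAll


locale rca =
  fixes M :: "'m l2struct" and E0 :: "nat \<Rightarrow> 'm set"
  assumes ba: "basic_axioms M" and ind1: "IND Sigma01 M" and dca: "Delta01_CA M"
    and ge: "good_env M E0"
begin

abbreviation "Z \<equiv> zr M"
abbreviation "Sc n \<equiv> ad M n (on M)"
abbreviation "pl \<equiv> ad M"
abbreviation "ml \<equiv> mu M"
abbreviation "ls \<equiv> lt M"
abbreviation "le a b \<equiv> lt M a b \<or> a = b"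

lemma A1: "Sc n \<noteq> Z" using ba unfolding basic_axioms_def by blast
lemma A2: "Sc m = Sc n \<longleftrightarrow> m = n" using ba unfolding basic_axioms_def by blast
lemma A3: "pl m Z = m" using ba unfolding basic_axioms_def by blast
lemma A4: "pl m (Sc n) = Sc (pl m n)" using ba unfolding basic_axioms_def by blast
lemma A5: "ml m Z = Z" using ba unfolding basic_axioms_def by blast
lemma A6: "ml m (Sc n) = pl (ml m n) m" using ba unfolding basic_axioms_def by blast
lemma A7: "\<not> ls m Z" using ba unfolding basic_axioms_def by blast
lemma A8: "ls m (Sc n) \<longleftrightarrow> ls m n \<or> m = n" using ba unfolding basic_axioms_def by blast

lemmas Ax = A1 A2 A3 A4 A5 A6 A7 A8

lemma ind_ex:
  assumes "bounded r" "\<And>m. (\<exists>a. sat M (e(x:=m, d:=a)) E0 r) = P m" "P Z" "\<And>m. P m \<Longrightarrow> P (Sc m)"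
  shows "P n"
proof -
  have "Sigma01 (Ex d r)" using assms(1) unfolding Sigma01_def by blast
  from ind1[unfolded IND_def, rule_format, OF this ge, of e x] assms(2-4)
  show ?thesis by simp
qed

lemma ind:
  assumes "bounded r" "\<And>m a. sat M (e(x:=m, d:=a)) E0 r = P m" "P Z" "\<And>m. P m \<Longrightarrow> P (Sc m)"
  shows "P n"
  using ind_ex[OF assms(1), of e x d P] assms(2-4) by simp

lemma comp:
  assumes "bounded r" "\<And>m a. sat M (e(x:=m, d:=a)) E0 r = P m"
  shows "\<exists>A\<in>l2sets M. \<forall>m. m \<in> A \<longleftrightarrow> P m"
proof -
  have "Sigma01 (Ex d r)" "Pi01 (All d r)" using assms(1) unfolding Sigma01_def Pi01_def by blast+
  from dca[unfolded Delta01_CA_def, rule_format, OF this ge, of e x] assms(2)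
  show ?thesis by simp
qed

lemma add_0_left: "pl Z n = n"
  by (rule ind[where r="Eq (Plus Zero (Var 0)) (Var 0)" and x=0 and d=1 and e="\<lambda>_. Z"])
     (auto intro!: bnd_intros simp: Ax)

lemma add_Suc_left: "pl (Sc m) n = Sc (pl m n)"
  by (rule ind[where r="Eq (Plus (Plus (Var 1) One) (Var 0)) (Plus (Plus (Var 1) (Var 0)) One)" and x=0 and d=2 and e="(\<lambda>_. Z)(1:=m)"])
     (auto intro!: bnd_intros simp: Ax)

lemma add_comm: "pl m n = pl n m"
  by (rule ind[where r="Eq (Plus (Var 1) (Var 0)) (Plus (Var 0) (Var 1))" and x=0 and d=2 and e="(\<lambda>_. Z)(1:=m)"])
     (auto intro!: bnd_intros simp: Ax add_0_left add_Suc_left)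

lemma add_assoc: "pl (pl a b) n = pl a (pl b n)"
  by (rule ind[where r="Eq (Plus (Plus (Var 1) (Var 2)) (Var 0)) (Plus (Var 1) (Plus (Var 2) (Var 0)))" and x=0 and d=3 and e="(\<lambda>_. Z)(1:=a,2:=b)"])
     (auto intro!: bnd_intros simp: Ax)

lemma add_lcomm: "pl a (pl b c) = pl b (pl a c)"
  by (metis add_assoc add_comm)

lemma add_cancel_right: "pl a n = pl b n \<Longrightarrow> a = b"
  by (rule ind[where r="Imp (Eq (Plus (Var 1) (Var 0)) (Plus (Var 2) (Var 0))) (Eq (Var 1) (Var 2))" and x=0 and d=3 and e="(\<lambda>_. Z)(1:=a,2:=b)" and P="\<lambda>n. pl a n = pl b n \<longrightarrow> a = b", rule_format])
     (auto intro!: bnd_intros simp: Ax)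

lemma add_cancel_left: "pl n a = pl n b \<Longrightarrow> a = b"
  using add_cancel_right add_comm by metis

lemma zero_or_suc: "n = Z \<or> (\<exists>p. n = Sc p)"
proof -
  have "n = Z \<or> (\<exists>p. ls p n \<and> n = Sc p)"
    by (rule ind[where r="Disj (Eq (Var 0) Zero) (BEx 1 (Var 0) (Eq (Var 0) (Plus (Var 1) One)))" and x=0 and d=2 and e="\<lambda>_. Z"])
       (auto intro!: bnd_intros simp: Ax sat_BEx)
  then show ?thesis by blast
qed

lemma lt_Suc: "ls n (Sc n)" by (simp add: A8)

lemma lt_trans: "ls a b \<Longrightarrow> ls b n \<Longrightarrow> ls a n"
  by (rule ind[where r="Imp (Less (Var 1) (Var 2)) (Imp (Less (Var 2) (Var 0)) (Less (Var 1) (Var 0)))" and x=0 and d=3 and e="(\<lambda>_. Z)(1:=a,2:=b)" and P="\<lambda>n. ls a b \<longrightarrow> ls b n \<longrightarrow> ls a n", rule_format])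
     (auto intro!: bnd_intros simp: Ax)

lemma lt_irrefl: "\<not> ls n n"
proof (rule ind[where r="Neg (Less (Var 0) (Var 0))" and x=0 and d=1 and e="\<lambda>_. Z"])
  fix m assume IH: "\<not> ls m m"
  show "\<not> ls (Sc m) (Sc m)"
  proof
    assume "ls (Sc m) (Sc m)"
    then have "ls (Sc m) m \<or> Sc m = m" using A8 by blast
    then show False using lt_trans[OF lt_Suc[of m]] lt_Suc[of m] IH by metis
  qed
qed (auto intro!: bnd_intros simp: Ax)

lemma zero_le: "le Z n"
  by (rule ind[where r="Disj (Less Zero (Var 0)) (Eq Zero (Var 0))" and x=0 and d=1 and e="\<lambda>_. Z"])
     (auto intro!: bnd_intros simp: Ax)

lemma lt_Suc_le: "ls n m \<Longrightarrow> le (Sc n) m"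
  by (rule ind[where r="Imp (Less (Var 1) (Var 0)) (Disj (Less (Plus (Var 1) One) (Var 0)) (Eq (Plus (Var 1) One) (Var 0)))" and x=0 and d=2 and e="(\<lambda>_. Z)(1:=n)" and P="\<lambda>m. ls n m \<longrightarrow> le (Sc n) m", rule_format])
     (auto intro!: bnd_intros simp: Ax)

lemma trich: "ls m n \<or> m = n \<or> ls n m"
  by (rule ind[where r="Disj (Less (Var 1) (Var 0)) (Disj (Eq (Var 1) (Var 0)) (Less (Var 0) (Var 1)))" and x=0 and d=2 and e="(\<lambda>_. Z)(1:=m)"])
     (use zero_le lt_Suc_le in \<open>auto intro!: bnd_intros simp: Ax\<close>)

lemma Suc_mono: "ls m n \<Longrightarrow> ls (Sc m) (Sc n)"
  using lt_Suc_le A8 by blast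

lemma le_trans: "le a b \<Longrightarrow> le b c \<Longrightarrow> le a c" using lt_trans by blast
lemma le_lt_trans: "le a b \<Longrightarrow> ls b c \<Longrightarrow> ls a c" using lt_trans by blast
lemma lt_le_trans: "ls a b \<Longrightarrow> le b c \<Longrightarrow> ls a c" using lt_trans by blast
lemma not_lt: "\<not> ls a b \<longleftrightarrow> le b a" using trich lt_irrefl lt_trans by blast
lemma lt_Suc_iff_le: "ls a (Sc b) \<longleftrightarrow> le a b" using A8 by blast
lemma le_Suc_iff_lt: "le (Sc a) b \<longleftrightarrow> ls a b"
  using lt_Suc_le lt_Suc lt_trans by blast

lemma le_add: "le a (pl a n)"
  by (rule ind[where r="Disj (Less (Var 1) (Plus (Var 1) (Var 0))) (Eq (Var 1) (Plus (Var 1) (Var 0)))" and x=0 and d=2 and e="(\<lambda>_. Z)(1:=a)"])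
     (auto intro!: bnd_intros simp: Ax)

lemma le_add2: "le a (pl n a)" using le_add add_comm by metis

lemma add_lt_mono: "ls a b \<Longrightarrow> ls (pl a n) (pl b n)"
  by (rule ind[where r="Imp (Less (Var 1) (Var 2)) (Less (Plus (Var 1) (Var 0)) (Plus (Var 2) (Var 0)))" and x=0 and d=3 and e="(\<lambda>_. Z)(1:=a,2:=b)" and P="\<lambda>n. ls a b \<longrightarrow> ls (pl a n) (pl b n)", rule_format])
     (auto intro!: bnd_intros simp: A3 A4 Suc_mono)

lemma add_le_mono: "le a b \<Longrightarrow> le (pl a n) (pl b n)" using add_lt_mono by blast
lemma add_le_mono2: "le a b \<Longrightarrow> le (pl n a) (pl n b)" using add_le_mono add_comm by metis

lemma mult_Suc_left: "ml (Sc m) n = pl (ml m n) n"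
  by (rule ind[where r="Eq (Times (Plus (Var 1) One) (Var 0)) (Plus (Times (Var 1) (Var 0)) (Var 0))" and x=0 and d=2 and e="(\<lambda>_. Z)(1:=m)"])
     (auto intro!: bnd_intros simp: Ax add_assoc add_Suc_left add_comm add_lcomm)

lemma sq_mono: "le a b \<Longrightarrow> le (ml a a) (ml b b)"
proof -
  have "le a b \<longrightarrow> le (ml a a) (ml b b)"
  proof (rule ind[where r="Imp (Disj (Less (Var 1) (Var 0)) (Eq (Var 1) (Var 0))) (Disj (Less (Times (Var 1) (Var 1)) (Times (Var 0) (Var 0))) (Eq (Times (Var 1) (Var 1)) (Times (Var 0) (Var 0))))" and x=0 and d=2 and e="(\<lambda>_. Z)(1:=a)" and P="\<lambda>b. le a b \<longrightarrow> le (ml a a) (ml b b)"])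
    fix b assume IH: "le a b \<longrightarrow> le (ml a a) (ml b b)"
    show "le a (Sc b) \<longrightarrow> le (ml a a) (ml (Sc b) (Sc b))"
    proof
      assume h: "le a (Sc b)"
      have "le (ml b b) (ml (Sc b) (Sc b))"
        using le_add[of "ml b b" "pl b (Sc b)"] by (simp add: A6 mult_Suc_left add_assoc)
      then show "le (ml a a) (ml (Sc b) (Sc b))" using h IH A8 le_trans by blast
    qed
  qed (auto intro!: bnd_intros simp: Ax)
  then show "le a b \<Longrightarrow> ?thesis" by blast
qed

lemma le_pr1: "le i (pr M i j)" unfolding pr_def using le_add2 by blast

lemma le_sq: "le s (ml s s)"
proof -
  consider "s = Z" | p where "s = Sc p" using zero_or_suc by blast
  then show ?thesis
  proof cases
    case 1 then show ?thesis by (simp add: A5)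
  next
    case 2 then show ?thesis using le_add2[of s "ml s p"] by (simp add: A6)
  qed
qed

lemma le_pr2: "le j (pr M i j)"
  unfolding pr_def using le_add2[of j i] le_sq[of "pl i j"] le_add[of "ml (pl i j) (pl i j)" i] le_trans
  by blast

lemma pr_lt: "le i s \<Longrightarrow> ls s s' \<Longrightarrow> ls (pl (ml s s) i) (pl (ml s' s') i')"
proof -
  assume h: "le i s" "ls s s'"
  have 1: "le (pl (ml s s) i) (pl (ml s s) s)" using add_le_mono2 h(1) by blast
  have 2: "ls (pl (ml s s) s) (ml (Sc s) (Sc s))"
  proof -
    have "ml (Sc s) (Sc s) = Sc (pl (pl (ml s s) s) s)" by (simp add: A6 mult_Suc_left A4)
    moreover have "le (pl (ml s s) s) (pl (pl (ml s s) s) s)" by (rule le_add)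
    ultimately show ?thesis using lt_Suc le_lt_trans by metis
  qed
  have 3: "le (ml (Sc s) (Sc s)) (ml s' s')" using sq_mono lt_Suc_le h(2) by blast
  have 4: "le (ml s' s') (pl (ml s' s') i')" by (rule le_add)
  show ?thesis using 1 2 3 4 le_lt_trans lt_le_trans le_trans by metis
qed

lemma pr_inj: "pr M i j = pr M i' j' \<Longrightarrow> i = i' \<and> j = j'"
proof -
  assume h: "pr M i j = pr M i' j'"
  define s where "s = pl i j"
  define s' where "s' = pl i' j'"
  have e: "pl (ml s s) i = pl (ml s' s') i'" using h unfolding pr_def s_def s'_def .
  have le1: "le i s" "le i' s'" unfolding s_def s'_def by (rule le_add)+
  have "s = s'"
  proof -
    { assume "ls s s'" then have False using pr_lt[OF le1(1), of s' i'] e lt_irrefl by metis }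
    moreover { assume "ls s' s" then have False using pr_lt[OF le1(2), of s i] e lt_irrefl by metis }
    ultimately show ?thesis using trich by blast
  qed
  then have "i = i'" using e add_cancel_left by blast
  moreover then have "j = j'" using \<open>s = s'\<close> unfolding s_def s'_def using add_cancel_left by blast
  ultimately show ?thesis by blast
qed

end

abbreviation "NN \<equiv> (1000::nat)"

locale main = rca +
  fixes e0 :: "nat \<Rightarrow> 'a" and v xv yv :: nat and q :: fm
  assumes bq: "bounded q"
begin

definition fmap :: "nat \<Rightarrow> nat \<Rightarrow> nat \<Rightarrow> nat \<Rightarrow> nat" where
  "fmap A B C u = (if u = yv then C else if u = xv then B else if u = v then A else u + NN)"

definition TH :: "'a \<Rightarrow> 'a \<Rightarrow> 'a \<Rightarrow> bool" where
  "TH m y z = sat M (e0(v:=m, xv:=y, yv:=z)) E0 q"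

definition env_ok :: "(nat \<Rightarrow> 'a) \<Rightarrow> bool" where
  "env_ok e \<longleftrightarrow> (\<forall>u. e (u + NN) = e0 u)"

lemma env_ok_upd[simp]: "env_ok e \<Longrightarrow> w < NN \<Longrightarrow> env_ok (e(w:=a))"
  unfolding env_ok_def by auto

lemma sat_BEx': "\<forall>u\<in>vars_trm t. u \<noteq> w \<Longrightarrow> sat M e E (BEx w t p) = (\<exists>a. lt M a (eval M e t) \<and> sat M (e(w:=a)) E p)"
  by (rule sat_BEx) blast
lemma sat_BAll': "\<forall>u\<in>vars_trm t. u \<noteq> w \<Longrightarrow> sat M e E (BAll w t p) = (\<forall>a. lt M a (eval M e t) \<longrightarrow> sat M (e(w:=a)) E p)"
  by (rule sat_BAll) blast
lemma eval_upd_notin': "\<forall>u\<in>vars_trm t. u \<noteq> x \<Longrightarrow> eval M (e(x:=a)) t = eval M e t"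
  by (rule eval_upd_notin) blast
lemma bounded_BEx': "\<forall>u\<in>vars_trm t. u \<noteq> w \<Longrightarrow> bounded p \<Longrightarrow> bounded (BEx w t p)"
  by (rule bounded_BEx) blast+
lemma bounded_BAll': "\<forall>u\<in>vars_trm t. u \<noteq> w \<Longrightarrow> bounded p \<Longrightarrow> bounded (BAll w t p)"
  by (rule bounded_BAll) blast+
lemmas bnd_intros' = bounded.intros(1-7) bounded_BEx' bounded_BAll'

definition base :: "nat \<Rightarrow> 'a" where "base w = e0 (w - NN)"
lemma env_ok_base[simp]: "env_ok base" unfolding env_ok_def base_def by simp

definition FTh :: "nat \<Rightarrow> nat \<Rightarrow> nat \<Rightarrow> fm" where
  "FTh A B C = ren (fmap A B C) q"

lemma inj_fmap: "distinct [A,B,C] \<Longrightarrow> A < NN \<Longrightarrow> B < NN \<Longrightarrow> C < NN \<Longrightarrow> inj (fmap A B C)"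
  unfolding inj_def fmap_def by auto

lemma sat_FTh[simp]: "env_ok e \<Longrightarrow> distinct [A,B,C] \<Longrightarrow> A < NN \<Longrightarrow> B < NN \<Longrightarrow> C < NN \<Longrightarrow>
  sat M e E0 (FTh A B C) = TH (e A) (e B) (e C)"
  unfolding FTh_def TH_def
  apply (subst sat_ren[OF inj_fmap], assumption+)
  apply (rule arg_cong[where f="\<lambda>e. sat M e E0 q"])
  apply (auto simp: fun_eq_iff fmap_def env_ok_def)
  done

lemma bounded_FTh[intro]: "distinct [A,B,C] \<Longrightarrow> A < NN \<Longrightarrow> B < NN \<Longrightarrow> C < NN \<Longrightarrow> bounded (FTh A B C)"
  unfolding FTh_def by (rule bounded_ren[OF inj_fmap bq])

definition R :: "'a \<Rightarrow> 'a \<Rightarrow> 'a \<Rightarrow> bool" where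
  "R m y s = (\<exists>z. ls z s \<and> \<not> TH m y z)"
definition Gd :: "'a \<Rightarrow> 'a \<Rightarrow> 'a \<Rightarrow> bool" where
  "Gd m s g = (le g s \<and> (g = s \<or> \<not> R m g s) \<and> (\<forall>y. ls y g \<longrightarrow> R m y s))"
definition Ch :: "'a \<Rightarrow> 'a \<Rightarrow> bool" where
  "Ch m s = (\<exists>g. ls g (Sc s) \<and> Gd m s g \<and> \<not> Gd m (Sc s) g)"
definition Hd :: "'a \<Rightarrow> 'a \<Rightarrow> 'a \<Rightarrow> bool" where
  "Hd c s a = ((ls a c \<and> Ch a s \<and> (\<forall>m. ls m a \<longrightarrow> \<not> Ch m s)) \<or> (a = c \<and> (\<forall>m. ls m c \<longrightarrow> \<not> Ch m s)))"
definition Hlt :: "'a \<Rightarrow> 'a \<Rightarrow> bool" where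
  "Hlt s a = (\<exists>m. ls m a \<and> Ch m s)"
definition Col :: "'a \<Rightarrow> 'a \<Rightarrow> 'a \<Rightarrow> 'a \<Rightarrow> bool" where
  "Col c i j a = (ls i j \<and> le a c \<and> (\<exists>s. ls s j \<and> le i s \<and> Hd c s a) \<and> (\<forall>s. ls s j \<longrightarrow> le i s \<longrightarrow> \<not> Hlt s a))"
definition OpR :: "'a \<Rightarrow> 'a \<Rightarrow> 'a \<Rightarrow> 'a \<Rightarrow> bool" where
  "OpR c a b d = (le a c \<and> le b c \<and> ((ls a b \<and> d = a) \<or> (\<not> ls a b \<and> d = b)))"

definition FR :: "nat \<Rightarrow> nat \<Rightarrow> trm \<Rightarrow> nat \<Rightarrow> fm" where
  "FR m y t z = BEx z t (Neg (FTh m y z))"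
definition FLe :: "nat \<Rightarrow> trm \<Rightarrow> fm" where
  "FLe a t = Disj (Less (Var a) t) (Eq (Var a) t)"
definition FGd :: "nat \<Rightarrow> trm \<Rightarrow> nat \<Rightarrow> nat \<Rightarrow> nat \<Rightarrow> fm" where
  "FGd m t g y z = Conj (FLe g t) (Conj (Disj (Eq (Var g) t) (Neg (FR m g t z))) (BAll y (Var g) (FR m y t z)))"
definition FCh :: "nat \<Rightarrow> nat \<Rightarrow> nat \<Rightarrow> nat \<Rightarrow> nat \<Rightarrow> fm" where
  "FCh m s g y z = BEx g (Plus (Var s) One) (Conj (FGd m (Var s) g y z) (Neg (FGd m (Plus (Var s) One) g y z)))"
definition FHd :: "nat \<Rightarrow> nat \<Rightarrow> nat \<Rightarrow> nat \<Rightarrow> nat \<Rightarrow> nat \<Rightarrow> nat \<Rightarrow> fm" where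
  "FHd s a c mm g y z = Disj (Conj (Less (Var a) (Var c)) (Conj (FCh a s g y z) (BAll mm (Var a) (Neg (FCh mm s g y z)))))
     (Conj (Eq (Var a) (Var c)) (BAll mm (Var c) (Neg (FCh mm s g y z))))"
definition FHlt :: "nat \<Rightarrow> nat \<Rightarrow> nat \<Rightarrow> nat \<Rightarrow> nat \<Rightarrow> nat \<Rightarrow> fm" where
  "FHlt s a mm g y z = BEx mm (Var a) (FCh mm s g y z)"
definition FCol :: "nat \<Rightarrow> nat \<Rightarrow> nat \<Rightarrow> nat \<Rightarrow> nat \<Rightarrow> nat \<Rightarrow> nat \<Rightarrow> nat \<Rightarrow> nat \<Rightarrow> fm" where
  "FCol i j a c s mm g y z = Conj (Less (Var i) (Var j)) (Conj (FLe a (Var c))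
     (Conj (BEx s (Var j) (Conj (FLe i (Var s)) (FHd s a c mm g y z)))
       (BAll s (Var j) (Imp (FLe i (Var s)) (Neg (FHlt s a mm g y z))))))"

lemma sat_FR[simp]: "env_ok e \<Longrightarrow> distinct [m,y,z] \<Longrightarrow> m < NN \<Longrightarrow> y < NN \<Longrightarrow> z < NN \<Longrightarrow> \<forall>u\<in>vars_trm t. u \<noteq> z \<Longrightarrow>
  sat M e E0 (FR m y t z) = R (e m) (e y) (eval M e t)"
  unfolding FR_def R_def by (simp add: sat_BEx' eq_commute)

lemma bounded_FR[intro]: "distinct [m,y,z] \<Longrightarrow> m < NN \<Longrightarrow> y < NN \<Longrightarrow> z < NN \<Longrightarrow> \<forall>u\<in>vars_trm t. u \<noteq> z \<Longrightarrow> bounded (FR m y t z)"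
  unfolding FR_def by (intro bnd_intros' bounded_FTh; simp add: eq_commute)

lemma sat_FLe[simp]: "sat M e E0 (FLe a t) = le (e a) (eval M e t)"
  unfolding FLe_def by simp
lemma bounded_FLe[intro]: "bounded (FLe a t)" unfolding FLe_def by (intro bnd_intros' bounded_FTh bounded_FR; simp add: eq_commute)

lemma sat_FGd[simp]: "env_ok e \<Longrightarrow> distinct [m,g,y,z] \<Longrightarrow> m < NN \<Longrightarrow> g < NN \<Longrightarrow> y < NN \<Longrightarrow> z < NN
  \<Longrightarrow> \<forall>u\<in>vars_trm t. u \<noteq> z \<Longrightarrow> \<forall>u\<in>vars_trm t. u \<noteq> y \<Longrightarrow>
  sat M e E0 (FGd m t g y z) = Gd (e m) (eval M e t) (e g)"
  unfolding FGd_def Gd_def by (simp add: sat_BAll' eval_upd_notin' eq_commute)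

lemma bounded_FGd[intro]: "distinct [m,g,y,z] \<Longrightarrow> m < NN \<Longrightarrow> g < NN \<Longrightarrow> y < NN \<Longrightarrow> z < NN
  \<Longrightarrow> \<forall>u\<in>vars_trm t. u \<noteq> z \<Longrightarrow> \<forall>u\<in>vars_trm t. u \<noteq> y \<Longrightarrow> bounded (FGd m t g y z)"
  unfolding FGd_def by (intro bnd_intros' bounded_FTh bounded_FR bounded_FLe; simp add: eq_commute)

lemma sat_FCh[simp]: "env_ok e \<Longrightarrow> distinct [m,s,g,y,z] \<Longrightarrow> m < NN \<Longrightarrow> s < NN \<Longrightarrow> g < NN \<Longrightarrow> y < NN \<Longrightarrow> z < NN \<Longrightarrow>
  sat M e E0 (FCh m s g y z) = Ch (e m) (e s)"
  unfolding FCh_def Ch_def by (simp add: sat_BEx' eq_commute)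

lemma bounded_FCh[intro]: "distinct [m,s,g,y,z] \<Longrightarrow> m < NN \<Longrightarrow> s < NN \<Longrightarrow> g < NN \<Longrightarrow> y < NN \<Longrightarrow> z < NN \<Longrightarrow>
  bounded (FCh m s g y z)"
  unfolding FCh_def by (intro bnd_intros' bounded_FTh bounded_FR bounded_FLe bounded_FGd; simp add: eq_commute)

lemma sat_FHd[simp]: "env_ok e \<Longrightarrow> distinct [s,a,c,mm,g,y,z] \<Longrightarrow> s < NN \<Longrightarrow> a < NN \<Longrightarrow> c < NN \<Longrightarrow> mm < NN \<Longrightarrow> g < NN \<Longrightarrow> y < NN \<Longrightarrow> z < NN \<Longrightarrow>
  sat M e E0 (FHd s a c mm g y z) = Hd (e c) (e s) (e a)"
  unfolding FHd_def Hd_def by (simp add: sat_BAll' eq_commute)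

lemma bounded_FHd[intro]: "distinct [s,a,c,mm,g,y,z] \<Longrightarrow> s < NN \<Longrightarrow> a < NN \<Longrightarrow> c < NN \<Longrightarrow> mm < NN \<Longrightarrow> g < NN \<Longrightarrow> y < NN \<Longrightarrow> z < NN \<Longrightarrow>
  bounded (FHd s a c mm g y z)"
  unfolding FHd_def by (intro bnd_intros' bounded_FTh bounded_FR bounded_FLe bounded_FGd bounded_FCh; simp add: eq_commute)

lemma sat_FHlt[simp]: "env_ok e \<Longrightarrow> distinct [s,a,mm,g,y,z] \<Longrightarrow> s < NN \<Longrightarrow> a < NN \<Longrightarrow> mm < NN \<Longrightarrow> g < NN \<Longrightarrow> y < NN \<Longrightarrow> z < NN \<Longrightarrow>
  sat M e E0 (FHlt s a mm g y z) = Hlt (e s) (e a)"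
  unfolding FHlt_def Hlt_def by (simp add: sat_BEx' eq_commute)

lemma bounded_FHlt[intro]: "distinct [s,a,mm,g,y,z] \<Longrightarrow> s < NN \<Longrightarrow> a < NN \<Longrightarrow> mm < NN \<Longrightarrow> g < NN \<Longrightarrow> y < NN \<Longrightarrow> z < NN \<Longrightarrow>
  bounded (FHlt s a mm g y z)"
  unfolding FHlt_def by (intro bnd_intros' bounded_FTh bounded_FR bounded_FLe bounded_FGd bounded_FCh bounded_FHd; simp add: eq_commute)

lemma sat_FCol[simp]: "env_ok e \<Longrightarrow> distinct [i,j,a,c,s,mm,g,y,z] \<Longrightarrow> i < NN \<Longrightarrow> j < NN \<Longrightarrow> s < NN \<Longrightarrow> a < NN \<Longrightarrow> c < NN \<Longrightarrow> mm < NN \<Longrightarrow> g < NN \<Longrightarrow> y < NN \<Longrightarrow> z < NN \<Longrightarrow>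
  sat M e E0 (FCol i j a c s mm g y z) = Col (e c) (e i) (e j) (e a)"
  unfolding FCol_def Col_def by (simp add: sat_BAll' sat_BEx' eq_commute)

lemma bounded_FCol[intro]: "distinct [i,j,a,c,s,mm,g,y,z] \<Longrightarrow> i < NN \<Longrightarrow> j < NN \<Longrightarrow> s < NN \<Longrightarrow> a < NN \<Longrightarrow> c < NN \<Longrightarrow> mm < NN \<Longrightarrow> g < NN \<Longrightarrow> y < NN \<Longrightarrow> z < NN \<Longrightarrow>
  bounded (FCol i j a c s mm g y z)"
  unfolding FCol_def by (intro bnd_intros' bounded_FTh bounded_FR bounded_FLe bounded_FGd bounded_FCh bounded_FHd bounded_FHlt; simp add: eq_commute)

end

context main begin

lemma R_mono: "R m y s \<Longrightarrow> le s t \<Longrightarrow> R m y t"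
  unfolding R_def using lt_trans by blast

lemma Gd_le: "Gd m s g \<Longrightarrow> le g s" unfolding Gd_def by blast

lemma Gd_uniq: assumes "Gd m s g" "Gd m s g'" shows "g = g'"
proof -
  have *: False if "Gd m s a" "Gd m s b" "ls a b" for a b
  proof -
    have "R m a s" using that unfolding Gd_def by blast
    moreover have "a \<noteq> s" using that Gd_le[OF that(2)] lt_irrefl lt_le_trans by blast
    ultimately show False using that(1) unfolding Gd_def by blast
  qed
  show ?thesis using *[OF assms] *[OF assms(2,1)] trich by blast
qed

lemma Gd_step_mono: assumes "Gd m s g" "Gd m (Sc s) g'" shows "le g g'"
proof (rule ccontr)
  assume "\<not> le g g'"
  then have h: "ls g' g" using not_lt by blast
  then have "R m g' s" using assms(1) unfolding Gd_def by blast
  then have "R m g' (Sc s)" using R_mono lt_Suc by blast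
  moreover have "g' \<noteq> Sc s" using h Gd_le[OF assms(1)] lt_Suc lt_irrefl lt_trans by metis
  ultimately show False using assms(2) unfolding Gd_def by blast
qed

lemma Gd_ex: "\<exists>g. Gd m s g"
proof -
  have "(\<forall>y. ls y k \<longrightarrow> R m y s) \<or> (\<exists>g. ls g (Sc s) \<and> Gd m s g)" for k
  proof (rule ind[where r="Disj (BAll 10 (Var 0) (FR 1 10 (Var 2) 11)) (BEx 12 (Plus (Var 2) One) (FGd 1 (Var 2) 12 13 14))"
        and x=0 and d=30 and e="base(1:=m, 2:=s)" and P="\<lambda>k. (\<forall>y. ls y k \<longrightarrow> R m y s) \<or> (\<exists>g. ls g (Sc s) \<and> Gd m s g)"])
    fix k assume IH: "(\<forall>y. ls y k \<longrightarrow> R m y s) \<or> (\<exists>g. ls g (Sc s) \<and> Gd m s g)"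
    show "(\<forall>y. ls y (Sc k) \<longrightarrow> R m y s) \<or> (\<exists>g. ls g (Sc s) \<and> Gd m s g)"
    proof (cases "\<exists>g. ls g (Sc s) \<and> Gd m s g")
      case False
      then have all: "\<forall>y. ls y k \<longrightarrow> R m y s" using IH by blast
      show ?thesis
      proof (cases "R m k s")
        case True then show ?thesis using all A8 by blast
      next
        case nR: False
        show ?thesis
        proof (cases "le k s")
          case True
          then have "Gd m s k" using all nR unfolding Gd_def by blast
          then show ?thesis using True A8 by blast
        next
          case False
          then have "ls s k" using not_lt by blast
          then have "Gd m s s" using all lt_trans unfolding Gd_def by blast
          then show ?thesis using lt_Suc by blast
        qed
      qed
    qed blast
  qed ((intro bnd_intros' bounded_FTh bounded_FR bounded_FLe bounded_FGd bounded_FCh bounded_FHd bounded_FHlt bounded_FCol; simp), simp add: sat_BAll' sat_BEx', (simp add: Ax)?)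
  from this[of s] show ?thesis
  proof
    assume "\<forall>y. ls y s \<longrightarrow> R m y s"
    then have "Gd m s s" unfolding Gd_def by blast
    then show ?thesis by blast
  qed blast
qed

lemma Gd_mono_int: assumes "le s t" "Gd m s g" "Gd m t g'" shows "le g g'"
proof -
  have "le s t \<longrightarrow> (\<forall>g'. ls g' (Sc t) \<longrightarrow> Gd m t g' \<longrightarrow> le g g')"
  proof (rule ind[where r="Imp (FLe 2 (Var 0)) (BAll 10 (Plus (Var 0) One) (Imp (FGd 1 (Var 0) 10 11 12) (FLe 3 (Var 10))))"
        and x=0 and d=30 and e="base(1:=m, 2:=s, 3:=g)" and P="\<lambda>t. le s t \<longrightarrow> (\<forall>g'. ls g' (Sc t) \<longrightarrow> Gd m t g' \<longrightarrow> le g g')"])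
    show "le s Z \<longrightarrow> (\<forall>g'. ls g' (Sc Z) \<longrightarrow> Gd m Z g' \<longrightarrow> le g g')"
      using assms(2) Gd_uniq A7 by blast
  next
    fix t assume IH: "le s t \<longrightarrow> (\<forall>g'. ls g' (Sc t) \<longrightarrow> Gd m t g' \<longrightarrow> le g g')"
    show "le s (Sc t) \<longrightarrow> (\<forall>g'. ls g' (Sc (Sc t)) \<longrightarrow> Gd m (Sc t) g' \<longrightarrow> le g g')"
    proof (intro impI allI)
      fix g' assume h: "le s (Sc t)" "ls g' (Sc (Sc t))" "Gd m (Sc t) g'"
      show "le g g'"
      proof (cases "s = Sc t")
        case True then show ?thesis using h assms(2) Gd_uniq by blast
      next
        case False
        then have "le s t" using h(1) A8 by blast
        obtain g'' where g'': "Gd m t g''" using Gd_ex by blast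
        then have "le g g''" using IH \<open>le s t\<close> Gd_le A8 by blast
        moreover have "le g'' g'" using Gd_step_mono g'' h(3) by blast
        ultimately show ?thesis using le_trans by blast
      qed
    qed
  qed ((intro bnd_intros' bounded_FTh bounded_FR bounded_FLe bounded_FGd bounded_FCh bounded_FHd bounded_FHlt bounded_FCol; simp), simp add: sat_BAll' sat_BEx', (simp add: Ax)?)
  then show ?thesis using assms Gd_le A8 by blast
qed

lemma A_dir: assumes "\<forall>z. TH m ys z" shows "\<exists>s0. \<forall>s. le s0 s \<longrightarrow> \<not> Ch m s"
proof (rule ccontr)
  assume "\<not> ?thesis"
  then have inf: "\<forall>s0. \<exists>s. le s0 s \<and> Ch m s" by blast
  have bnd: "le g ys" if "Gd m s g" for s g
  proof (rule ccontr)
    assume "\<not> le g ys"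
    then have "ls ys g" using not_lt by blast
    then have "R m ys s" using that unfolding Gd_def by blast
    then show False using assms unfolding R_def by blast
  qed
  have "\<exists>s g. ls g (Sc s) \<and> le ys s \<and> Gd m s g \<and> le w g" for w
  proof (rule ind_ex[where r="BEx 10 (Plus (Var 20) One) (Conj (FLe 2 (Var 20)) (Conj (FGd 1 (Var 20) 10 11 12) (FLe 0 (Var 10))))"
        and x=0 and d=20 and e="base(1:=m, 2:=ys)" and P="\<lambda>w. \<exists>s g. ls g (Sc s) \<and> le ys s \<and> Gd m s g \<and> le w g"])
    show "\<exists>s g. ls g (Sc s) \<and> le ys s \<and> Gd m s g \<and> le Z g"
      using Gd_ex[of m ys] Gd_le zero_le A8 by blast
  next
    fix w assume "\<exists>s g. ls g (Sc s) \<and> le ys s \<and> Gd m s g \<and> le w g"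
    then obtain s g where sg: "le ys s" "Gd m s g" "le w g" by blast
    obtain s' where s': "le s s'" "Ch m s'" using inf by blast
    then obtain g1 where g1: "Gd m s' g1" "\<not> Gd m (Sc s') g1" unfolding Ch_def by blast
    obtain g2 where g2: "Gd m (Sc s') g2" using Gd_ex by blast
    have "le g1 g2" using Gd_step_mono g1 g2 by blast
    then have "ls g1 g2" using g1 g2 by blast
    moreover have "le g g1" using Gd_mono_int s'(1) sg(2) g1(1) by blast
    ultimately have "ls w g2" using sg(3) le_lt_trans by blast
    then have "le (Sc w) g2" using lt_Suc_le by blast
    moreover have "le ys (Sc s')" using sg(1) s'(1) le_trans lt_Suc by blast
    ultimately show "\<exists>s g. ls g (Sc s) \<and> le ys s \<and> Gd m s g \<and> le (Sc w) g"
      using g2 Gd_le A8 by blast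
  qed ((intro bnd_intros' bounded_FTh bounded_FR bounded_FLe bounded_FGd bounded_FCh bounded_FHd bounded_FHlt bounded_FCol; simp), simp add: sat_BAll' sat_BEx', (simp add: Ax)?)
  from this[of "Sc ys"] obtain s g where "Gd m s g" "le (Sc ys) g" by blast
  then show False using bnd le_Suc_iff_lt lt_irrefl le_lt_trans by blast
qed

lemma B_dir: assumes "\<forall>s. le s0 s \<longrightarrow> \<not> Ch m s" shows "\<exists>y. \<forall>z. TH m y z"
proof -
  obtain g0 where g0: "Gd m s0 g0" using Gd_ex by blast
  have all: "le s0 t \<longrightarrow> Gd m t g0" for t
  proof (rule ind[where r="Imp (FLe 2 (Var 0)) (FGd 1 (Var 0) 3 11 12)"
        and x=0 and d=30 and e="base(1:=m, 2:=s0, 3:=g0)" and P="\<lambda>t. le s0 t \<longrightarrow> Gd m t g0"])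
    show "le s0 Z \<longrightarrow> Gd m Z g0" using g0 A7 by blast
  next
    fix t assume IH: "le s0 t \<longrightarrow> Gd m t g0"
    show "le s0 (Sc t) \<longrightarrow> Gd m (Sc t) g0"
    proof
      assume h: "le s0 (Sc t)"
      show "Gd m (Sc t) g0"
      proof (cases "s0 = Sc t")
        case True then show ?thesis using g0 by simp
      next
        case False
        then have "le s0 t" using h A8 by blast
        then have "Gd m t g0" "\<not> Ch m t" using IH assms by blast+
        then show ?thesis unfolding Ch_def using Gd_le A8 by blast
      qed
    qed
  qed ((intro bnd_intros' bounded_FTh bounded_FR bounded_FLe bounded_FGd bounded_FCh bounded_FHd bounded_FHlt bounded_FCol; simp), simp add: sat_BAll' sat_BEx', (simp add: Ax)?)
  have "TH m g0 z" for z
  proof -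
    define t where "t = Sc (pl z (pl s0 g0))"
    have lz: "ls z t" unfolding t_def by (rule le_lt_trans[OF le_add lt_Suc])
    have lg: "ls g0 t" unfolding t_def
      by (rule le_lt_trans[OF le_trans[OF le_add2[of g0 s0] le_add2[of "pl s0 g0" z]] lt_Suc])
    have ls0': "ls s0 t" unfolding t_def
      by (rule le_lt_trans[OF le_trans[OF le_add[of s0 g0] le_add2[of "pl s0 g0" z]] lt_Suc])
    then have ls0: "le s0 t" by blast
    have "Gd m t g0" using all ls0 by blast
    then have "\<not> R m g0 t" using lg lt_irrefl unfolding Gd_def by blast
    then show ?thesis using lz unfolding R_def by blast
  qed
  then show ?thesis by blast
qed

end

context main begin

lemma Hd_ex: "\<exists>a. Hd c s a"
proof -
  have "(\<forall>m. ls m k \<longrightarrow> \<not> Ch m s) \<or> (\<exists>a. ls a k \<and> Ch a s \<and> (\<forall>m. ls m a \<longrightarrow> \<not> Ch m s))" for k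
  proof (rule ind[where r="Disj (BAll 10 (Var 0) (Neg (FCh 10 2 11 12 13))) (BEx 14 (Var 0) (Conj (FCh 14 2 11 12 13) (BAll 10 (Var 14) (Neg (FCh 10 2 11 12 13)))))"
        and x=0 and d=30 and e="base(2:=s)" and P="\<lambda>k. (\<forall>m. ls m k \<longrightarrow> \<not> Ch m s) \<or> (\<exists>a. ls a k \<and> Ch a s \<and> (\<forall>m. ls m a \<longrightarrow> \<not> Ch m s))"])
    show "(\<forall>m. ls m Z \<longrightarrow> \<not> Ch m s) \<or> (\<exists>a. ls a Z \<and> Ch a s \<and> (\<forall>m. ls m a \<longrightarrow> \<not> Ch m s))"
      using A7 by blast
  next
    fix k assume IH: "(\<forall>m. ls m k \<longrightarrow> \<not> Ch m s) \<or> (\<exists>a. ls a k \<and> Ch a s \<and> (\<forall>m. ls m a \<longrightarrow> \<not> Ch m s))"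
    show "(\<forall>m. ls m (Sc k) \<longrightarrow> \<not> Ch m s) \<or> (\<exists>a. ls a (Sc k) \<and> Ch a s \<and> (\<forall>m. ls m a \<longrightarrow> \<not> Ch m s))"
    proof (cases "\<exists>a. ls a k \<and> Ch a s \<and> (\<forall>m. ls m a \<longrightarrow> \<not> Ch m s)")
      case True then show ?thesis using A8 by blast
    next
      case False
      then have all: "\<forall>m. ls m k \<longrightarrow> \<not> Ch m s" using IH by blast
      show ?thesis
      proof (cases "Ch k s")
        case True then show ?thesis using all lt_Suc by blast
      next
        case False then show ?thesis using all A8 by blast
      qed
    qed
  qed ((intro bnd_intros' bounded_FTh bounded_FR bounded_FLe bounded_FGd bounded_FCh bounded_FHd bounded_FHlt bounded_FCol; simp), simp add: sat_BAll' sat_BEx')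
  from this[of c] show ?thesis unfolding Hd_def by blast
qed

lemma Hd_le: "Hd c s a \<Longrightarrow> le a c" unfolding Hd_def by blast

lemma Hd_uniq: assumes "Hd c s a" "Hd c s b" shows "a = b"
proof -
  have *: False if "Hd c s a" "Hd c s b" "ls a b" for a b
  proof -
    have "Ch a s" "ls a c"
      using that unfolding Hd_def using lt_irrefl lt_trans by blast+
    then show False using that unfolding Hd_def by blast
  qed
  show ?thesis using *[OF assms] *[OF assms(2,1)] trich by blast
qed

lemma Hlt_iff: assumes "Hd c s a" "le b c" shows "Hlt s b \<longleftrightarrow> ls a b"
proof
  assume "Hlt s b"
  then obtain m where m: "ls m b" "Ch m s" unfolding Hlt_def by blast
  show "ls a b"
  proof (rule ccontr)
    assume "\<not> ls a b"
    then have "le b a" using not_lt by blast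
    then have "ls m a" using m(1) lt_le_trans by blast
    moreover have "ls m c" using m(1) assms(2) lt_le_trans by blast
    ultimately show False using assms(1) m(2) unfolding Hd_def by blast
  qed
next
  assume h: "ls a b"
  have "ls a c" using h assms(2) lt_le_trans by blast
  then have "Ch a s" using assms(1) lt_irrefl unfolding Hd_def by blast
  then show "Hlt s b" using h unfolding Hlt_def by blast
qed

lemma Hlt_mono: "Hlt s x \<Longrightarrow> le x y \<Longrightarrow> Hlt s y"
  unfolding Hlt_def using lt_le_trans by blast

definition mn :: "'a \<Rightarrow> 'a \<Rightarrow> 'a" where "mn a b = (if ls a b then a else b)"

lemma mn_le1: "le (mn a b) a" unfolding mn_def using not_lt by auto
lemma mn_le2: "le (mn a b) b" unfolding mn_def by auto

lemma Col_uniq: assumes "Col c i j a" "Col c i j b" shows "a = b"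
proof -
  have *: "\<not> ls a b" if h: "Col c i j a" "Col c i j b" for a b
  proof -
    obtain s where s: "ls s j" "le i s" "Hd c s a" using h(1) unfolding Col_def by blast
    have "le b c" "\<not> Hlt s b" using h(2) s unfolding Col_def by blast+
    then show ?thesis using Hlt_iff[OF s(3)] by blast
  qed
  show ?thesis using *[OF assms] *[OF assms(2,1)] trich by blast
qed

lemma Col_le: "Col c i j a \<Longrightarrow> le a c" unfolding Col_def by blast

lemma Col_single: assumes "Hd c j a" shows "Col c j (Sc j) a"
proof -
  have "le a c" using Hd_le assms by blast
  moreover have "\<not> Hlt s a" if "ls s (Sc j)" "le j s" for s
  proof -
    have "s = j" using that A8 lt_irrefl lt_trans by blast
    then show ?thesis using Hlt_iff[OF assms \<open>le a c\<close>] lt_irrefl by blast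
  qed
  ultimately show ?thesis unfolding Col_def using assms lt_Suc by blast
qed

lemma Col_join: assumes "Col c i j a" "Col c j k b" shows "Col c i k (mn a b)"
proof -
  have ij: "ls i j" and jk: "ls j k" using assms unfolding Col_def by blast+
  have ik: "ls i k" using ij jk lt_trans by blast
  have lec: "le (mn a b) c" using assms Col_le unfolding mn_def by auto
  have wit: "\<exists>s. ls s k \<and> le i s \<and> Hd c s (mn a b)"
  proof (cases "ls a b")
    case True
    then obtain s where "ls s j" "le i s" "Hd c s a" using assms(1) unfolding Col_def by blast
    then show ?thesis using True jk lt_trans unfolding mn_def by auto
  next
    case False
    then obtain s where s: "ls s k" "le j s" "Hd c s b" using assms(2) unfolding Col_def by blast
    then have "le i s" using ij le_lt_trans[of i j] lt_le_trans by blast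
    then show ?thesis using s False unfolding mn_def by auto
  qed
  have "\<not> Hlt s (mn a b)" if "ls s k" "le i s" for s
  proof
    assume h: "Hlt s (mn a b)"
    show False
    proof (cases "ls s j")
      case True
      then have "\<not> Hlt s a" using assms(1) that(2) unfolding Col_def by blast
      then show False using Hlt_mono[OF h mn_le1] by blast
    next
      case False
      then have "le j s" using not_lt by blast
      then have "\<not> Hlt s b" using assms(2) that(1) unfolding Col_def by blast
      then show False using Hlt_mono[OF h mn_le2] by blast
    qed
  qed
  then show ?thesis unfolding Col_def using ik lec wit by blast
qed

lemma Col_ex: assumes "ls i j" shows "\<exists>a. Col c i j a"
proof -
  have "ls i j \<longrightarrow> (\<exists>a. ls a (Sc c) \<and> Col c i j a)"
  proof (rule ind[where r="Imp (Less (Var 1) (Var 0)) (BEx 3 (Plus (Var 2) One) (FCol 1 0 3 2 10 14 11 12 13))"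
        and x=0 and d=30 and e="base(1:=i, 2:=c)" and P="\<lambda>j. ls i j \<longrightarrow> (\<exists>a. ls a (Sc c) \<and> Col c i j a)"])
    show "ls i Z \<longrightarrow> (\<exists>a. ls a (Sc c) \<and> Col c i Z a)" using A7 by blast
  next
    fix j assume IH: "ls i j \<longrightarrow> (\<exists>a. ls a (Sc c) \<and> Col c i j a)"
    show "ls i (Sc j) \<longrightarrow> (\<exists>a. ls a (Sc c) \<and> Col c i (Sc j) a)"
    proof
      assume h: "ls i (Sc j)"
      obtain a2 where a2: "Hd c j a2" using Hd_ex by blast
      have C2: "Col c j (Sc j) a2" using Col_single[OF a2] .
      have "\<exists>a. Col c i (Sc j) a"
      proof (cases "i = j")
        case True then show ?thesis using C2 by blast
      next
        case False
        then have "ls i j" using h A8 by blast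
        then obtain a1 where "Col c i j a1" using IH by blast
        then show ?thesis using Col_join C2 by blast
      qed
      then show "\<exists>a. ls a (Sc c) \<and> Col c i (Sc j) a" using Col_le A8 by blast
    qed
  qed ((intro bnd_intros' bounded_FTh bounded_FR bounded_FLe bounded_FGd bounded_FCh bounded_FHd bounded_FHlt bounded_FCol; simp), simp add: sat_BAll' sat_BEx')
  then show ?thesis using assms by blast
qed

lemma mn_assoc: "mn (mn a b) d = mn a (mn b d)"
proof -
  consider "ls a b" | "a = b" | "ls b a" using trich by blast
  then show ?thesis
  proof cases
    case 1
    then show ?thesis unfolding mn_def using lt_trans lt_irrefl trich by (smt (verit))
  next
    case 2
    then show ?thesis unfolding mn_def using lt_trans lt_irrefl trich by (smt (verit))
  next
    case 3
    then show ?thesis unfolding mn_def using lt_trans lt_irrefl trich by (smt (verit))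
  qed
qed

lemma OpR_mn: "OpR c a b d \<longleftrightarrow> le a c \<and> le b c \<and> d = mn a b"
  unfolding OpR_def mn_def by auto

end

definition prT :: "trm \<Rightarrow> trm \<Rightarrow> trm" where
  "prT a b = Plus (Times (Plus a b) (Plus a b)) a"

lemma eval_prT[simp]: "eval M e (prT a b) = pr M (eval M e a) (eval M e b)"
  unfolding prT_def pr_def by simp

lemma vars_prT[simp]: "vars_trm (prT a b) = vars_trm a \<union> vars_trm b"
  unfolding prT_def by auto

context main begin

lemma code_mem:
  assumes A: "\<forall>k. k \<in> A \<longleftrightarrow> (\<exists>a b d. ls a (Sc k) \<and> ls b (Sc k) \<and> ls d (Sc k) \<and> k = pr M (pr M a b) d \<and> Q a b d)"
  shows "pr M (pr M a b) d \<in> A \<longleftrightarrow> Q a b d"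
    and "k \<in> A \<Longrightarrow> \<exists>a b d. k = pr M (pr M a b) d \<and> Q a b d"
proof -
  let ?k = "pr M (pr M a b) d"
  have "le a ?k" using le_trans[OF le_pr1[of a b] le_pr1[of "pr M a b" d]] .
  moreover have "le b ?k" using le_trans[OF le_pr2[of b a] le_pr1[of "pr M a b" d]] .
  moreover have "le d ?k" using le_pr2 .
  ultimately have bnds: "ls a (Sc ?k)" "ls b (Sc ?k)" "ls d (Sc ?k)" using A8 by blast+
  show "?k \<in> A \<longleftrightarrow> Q a b d"
  proof
    assume "?k \<in> A"
    then obtain a' b' d' where "?k = pr M (pr M a' b') d'" "Q a' b' d'" using A by blast
    then show "Q a b d" using pr_inj by metis
  next
    assume "Q a b d" then show "?k \<in> A" using A bnds by blast
  qed
  show "k \<in> A \<Longrightarrow> \<exists>a b d. k = pr M (pr M a b) d \<and> Q a b d" using A by blast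
qed

lemma main_contra:
  assumes art: "ART M"
    and base0: "\<exists>y. \<forall>z. TH Z y z"
    and step: "\<And>m. (\<exists>y. \<forall>z. TH m y z) \<Longrightarrow> (\<exists>y. \<forall>z. TH (Sc m) y z)"
    and notc: "\<not> (\<exists>y. \<forall>z. TH c y z)"
  shows False
proof -
  obtain Sg where SgL: "Sg \<in> l2sets M" and SgM: "\<forall>k. k \<in> Sg \<longleftrightarrow> le k c"
    using comp[where r="FLe 0 (Var 5)" and x=0 and d=30 and e="base(5:=c)" and P="\<lambda>k. le k c"]
    by (auto intro: bounded_FLe)
  obtain Op where OpL: "Op \<in> l2sets M" and OpA: "\<forall>k. k \<in> Op \<longleftrightarrow> (\<exists>a b d. ls a (Sc k) \<and> ls b (Sc k) \<and> ls d (Sc k) \<and> k = pr M (pr M a b) d \<and> OpR c a b d)"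
  proof -
    have "\<exists>A\<in>l2sets M. \<forall>k. k \<in> A \<longleftrightarrow> (\<exists>a b d. ls a (Sc k) \<and> ls b (Sc k) \<and> ls d (Sc k) \<and> k = pr M (pr M a b) d \<and> OpR c a b d)"
    proof (rule comp[where r="BEx 1 (Plus (Var 0) One) (BEx 2 (Plus (Var 0) One) (BEx 3 (Plus (Var 0) One)
          (Conj (Eq (Var 0) (prT (prT (Var 1) (Var 2)) (Var 3)))
            (Conj (FLe 1 (Var 5)) (Conj (FLe 2 (Var 5)) (Disj (Conj (Less (Var 1) (Var 2)) (Eq (Var 3) (Var 1))) (Conj (Neg (Less (Var 1) (Var 2))) (Eq (Var 3) (Var 2)))))))))"
          and x=0 and d=30 and e="base(5:=c)"])
      show "bounded (BEx 1 (Plus (Var 0) One) (BEx 2 (Plus (Var 0) One) (BEx 3 (Plus (Var 0) One)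
          (Conj (Eq (Var 0) (prT (prT (Var 1) (Var 2)) (Var 3)))
            (Conj (FLe 1 (Var 5)) (Conj (FLe 2 (Var 5)) (Disj (Conj (Less (Var 1) (Var 2)) (Eq (Var 3) (Var 1))) (Conj (Neg (Less (Var 1) (Var 2))) (Eq (Var 3) (Var 2))))))))))"
        by (intro bnd_intros' bounded_FLe; simp)
    qed (simp add: sat_BEx' OpR_def, (blast)?)
    then show ?thesis using that by blast
  qed
  obtain Cc where CcL: "Cc \<in> l2sets M" and CcA: "\<forall>k. k \<in> Cc \<longleftrightarrow> (\<exists>i j a. ls i (Sc k) \<and> ls j (Sc k) \<and> ls a (Sc k) \<and> k = pr M (pr M i j) a \<and> Col c i j a)"
  proof -
    have "\<exists>A\<in>l2sets M. \<forall>k. k \<in> A \<longleftrightarrow> (\<exists>i j a. ls i (Sc k) \<and> ls j (Sc k) \<and> ls a (Sc k) \<and> k = pr M (pr M i j) a \<and> Col c i j a)"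
    proof (rule comp[where r="BEx 1 (Plus (Var 0) One) (BEx 2 (Plus (Var 0) One) (BEx 3 (Plus (Var 0) One)
          (Conj (Eq (Var 0) (prT (prT (Var 1) (Var 2)) (Var 3))) (FCol 1 2 3 5 10 14 11 12 13))))"
          and x=0 and d=30 and e="base(5:=c)"])
      show "bounded (BEx 1 (Plus (Var 0) One) (BEx 2 (Plus (Var 0) One) (BEx 3 (Plus (Var 0) One)
          (Conj (Eq (Var 0) (prT (prT (Var 1) (Var 2)) (Var 3))) (FCol 1 2 3 5 10 14 11 12 13)))))"
        by (intro bnd_intros' bounded_FCol; simp)
    qed (simp add: sat_BEx', (blast)?)
    then show ?thesis using that by blast
  qed
  note OpM = code_mem[OF OpA] and CcM = code_mem[OF CcA]
  have OpM': "pr M (pr M a b) d \<in> Op \<longleftrightarrow> le a c \<and> le b c \<and> d = mn a b" for a b d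
    by (simp add: OpM(1) OpR_mn)
  have mnc: "le a c \<Longrightarrow> le b c \<Longrightarrow> le (mn a b) c" for a b by (rule le_trans[OF mn_le1])

  have H1: "model_finite M Sg" unfolding model_finite_def
  proof
    show "\<forall>s\<in>Sg. ls s (Sc c)" using SgM A8 by simp
  qed
  have H2: "is_fun M {pr M a b |a b. a \<in> Sg \<and> b \<in> Sg} Sg Op"
    unfolding is_fun_def
  proof (intro conjI ballI allI impI)
    fix k assume "k \<in> Op"
    then obtain a b d where "k = pr M (pr M a b) d" "OpR c a b d" using OpM(2) by blast
    then show "\<exists>i\<in>{pr M a b |a b. a \<in> Sg \<and> b \<in> Sg}. \<exists>y\<in>Sg. k = pr M i y"
      using SgM mnc unfolding OpR_mn by blast
  next
    fix i assume "i \<in> {pr M a b |a b. a \<in> Sg \<and> b \<in> Sg}"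
    then obtain a b where "i = pr M a b" "le a c" "le b c" using SgM by blast
    then show "\<exists>y\<in>Sg. pr M i y \<in> Op" using OpM' SgM mnc by blast
  next
    fix i y y' assume "i \<in> {pr M a b |a b. a \<in> Sg \<and> b \<in> Sg}" "pr M i y \<in> Op" "pr M i y' \<in> Op"
    then obtain a b where "i = pr M a b" by blast
    then show "y = y'" using OpM' \<open>pr M i y \<in> Op\<close> \<open>pr M i y' \<in> Op\<close> by simp
  qed
  have H3: "\<forall>a\<in>Sg. \<forall>b\<in>Sg. \<forall>ca\<in>Sg. \<forall>d e f g.
          pr M (pr M a b) d \<in> Op \<longrightarrow> pr M (pr M d ca) e \<in> Op \<longrightarrow> pr M (pr M b ca) f \<in> Op \<longrightarrow> pr M (pr M a f) g \<in> Op \<longrightarrow> e = g"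
  proof (intro ballI allI impI)
    fix a b ca d e f g
    assume h: "pr M (pr M a b) d \<in> Op" "pr M (pr M d ca) e \<in> Op" "pr M (pr M b ca) f \<in> Op" "pr M (pr M a f) g \<in> Op"
    have "d = mn a b" "e = mn d ca" "f = mn b ca" "g = mn a f" using h by (simp_all add: OpM')
    then show "e = g" using mn_assoc by simp
  qed
  have H4: "is_fun M {pr M i j |i j. ls i j} Sg Cc"
    unfolding is_fun_def
  proof (intro conjI ballI allI impI)
    fix k assume "k \<in> Cc"
    then obtain i j a where "k = pr M (pr M i j) a" "Col c i j a" using CcM(2) by blast
    moreover have "ls i j" "le a c" using \<open>Col c i j a\<close> unfolding Col_def by blast+
    ultimately show "\<exists>i\<in>{pr M i j |i j. ls i j}. \<exists>y\<in>Sg. k = pr M i y"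
      using SgM by blast
  next
    fix k assume "k \<in> {pr M i j |i j. ls i j}"
    then obtain i j where "k = pr M i j" "ls i j" by blast
    then obtain a where "Col c i j a" using Col_ex by blast
    then have "pr M k a \<in> Cc" "a \<in> Sg" using CcM(1) SgM Col_le \<open>k = pr M i j\<close> by simp_all
    then show "\<exists>y\<in>Sg. pr M k y \<in> Cc" by blast
  next
    fix k y y' assume "k \<in> {pr M i j |i j. ls i j}" "pr M k y \<in> Cc" "pr M k y' \<in> Cc"
    then obtain i j where "k = pr M i j" by blast
    then have "Col c i j y" "Col c i j y'" using CcM(1) \<open>pr M k y \<in> Cc\<close> \<open>pr M k y' \<in> Cc\<close> by simp_all
    then show "y = y'" by (rule Col_uniq)
  qed
  have H5: "\<forall>i j k a b ca. ls i j \<longrightarrow> ls j k \<longrightarrow>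
          pr M (pr M i j) a \<in> Cc \<longrightarrow> pr M (pr M j k) b \<in> Cc \<longrightarrow> pr M (pr M i k) ca \<in> Cc \<longrightarrow> pr M (pr M a b) ca \<in> Op"
  proof (intro allI impI)
    fix i j k a b ca
    assume h: "ls i j" "ls j k" "pr M (pr M i j) a \<in> Cc" "pr M (pr M j k) b \<in> Cc" "pr M (pr M i k) ca \<in> Cc"
    have C: "Col c i j a" "Col c j k b" "Col c i k ca" using h by (simp_all add: CcM(1))
    then have "ca = mn a b" using Col_join[OF C(1,2)] Col_uniq[OF C(3)] by simp
    then show "pr M (pr M a b) ca \<in> Op" using OpM' Col_le[OF C(1)] Col_le[OF C(2)] by simp
  qed
  obtain I a where IL: "I \<in> l2sets M" and Iinf: "model_infinite M I" and aS: "a \<in> Sg"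
    and Icol: "\<forall>i\<in>I. \<forall>j\<in>I. ls i j \<longrightarrow> pr M (pr M i j) a \<in> Cc"
  proof -
    note X = bspec[OF bspec[OF bspec[OF art[unfolded ART_def Let_def] SgL] OpL] CcL]
    have "\<exists>I\<in>l2sets M. model_infinite M I \<and> (\<exists>a\<in>Sg. \<forall>i\<in>I. \<forall>j\<in>I. ls i j \<longrightarrow> pr M (pr M i j) a \<in> Cc)"
      by (rule mp[OF mp[OF mp[OF mp[OF mp[OF X H1] H2] H3] H4] H5])
    then show ?thesis using that by blast
  qed
  have ac: "le a c" using aS SgM by blast
  have Icol': "Col c i j a" if "i \<in> I" "j \<in> I" "ls i j" for i j using Icol that CcM(1) by blast
  obtain i0 where i0: "i0 \<in> I" using Iinf unfolding model_infinite_def by blast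
  have claim1: "\<not> Hlt s a" if "le i0 s" for s
  proof -
    obtain j where j: "j \<in> I" "ls s j" using Iinf unfolding model_infinite_def by blast
    then have "ls i0 j" using that le_lt_trans by blast
    then have "Col c i0 j a" using Icol' i0 j by blast
    then show ?thesis using j that unfolding Col_def by blast
  qed
  have claim2: "\<exists>s. le n s \<and> Hd c s a" for n
  proof -
    obtain j1 where j1: "j1 \<in> I" "ls n j1" using Iinf unfolding model_infinite_def by blast
    obtain j2 where j2: "j2 \<in> I" "ls j1 j2" using Iinf unfolding model_infinite_def by blast
    have "Col c j1 j2 a" using Icol' j1 j2 by blast
    then obtain s where "le j1 s" "Hd c s a" unfolding Col_def by blast
    then show ?thesis using j1(2) lt_le_trans by blast
  qed
  have below: "\<exists>y. \<forall>z. TH m y z" if "ls m a" for m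
  proof (rule B_dir[of i0])
    show "\<forall>s. le i0 s \<longrightarrow> \<not> Ch m s" using claim1 that unfolding Hlt_def by blast
  qed
  have nota: "\<not> (\<exists>y. \<forall>z. TH a y z)"
  proof (cases "a = c")
    case True then show ?thesis using notc by simp
  next
    case False
    show ?thesis
    proof
      assume "\<exists>y. \<forall>z. TH a y z"
      then obtain s0 where s0: "\<forall>s. le s0 s \<longrightarrow> \<not> Ch a s" using A_dir by blast
      obtain s where "le s0 s" "Hd c s a" using claim2 by blast
      then show False using s0 False unfolding Hd_def by blast
    qed
  qed
  consider "a = Z" | p where "a = Sc p" using zero_or_suc by blast
  then show False
  proof cases
    case 1 then show False using nota base0 by simp
  next
    case 2
    then have "ls p a" using lt_Suc by simp
    then show False using below step nota 2 by blast
  qed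
qed

end

theorem mainTheorem5:
  fixes M :: "'m l2struct"
  assumes "RCA0 M" and "ART M"
  shows "IND Sigma02 M"
  unfolding IND_def
proof (intro allI impI)
  fix p x e E m
  assume S2: "Sigma02 p" and gE: "good_env M E" and b0: "sat M (e(x := zr M)) E p"
    and st: "\<forall>m. sat M (e(x := m)) E p \<longrightarrow> sat M (e(x := ad M m (on M))) E p"
  obtain x' y' q0 where p: "p = Ex x' (All y' q0)" and bq: "bounded q0"
    using S2 unfolding Sigma02_def by blast
  interpret main M E e x x' y' q0
    using assms(1) gE bq unfolding RCA0_def by unfold_locales auto
  have eq: "sat M (e(x := k)) E p \<longleftrightarrow> (\<exists>y. \<forall>z. TH k y z)" for k
    unfolding p TH_def by simp
  show "sat M (e(x := m)) E p"
  proof (rule ccontr)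
    assume "\<not> sat M (e(x := m)) E p"
    then show False
      using main_contra[OF assms(2), of m] b0 st eq by blast
  qed
qed


end
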